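(* Let $\pi\in S_n$ be shallow. Then: (1) there are no indices $r<i<j<s$ with $\pi_i=n$, $\pi_j=1$ and $\pi_r>\pi_s$ (i.e. $\pi$ avoids the mesh pattern $3\mathbf{4}\mathbf{1}2$, an occurrence of $3412$ whose "4" is the entry $n$ and whose "1" is the entry $1$); and (2) there are no indices $1<i<j<n$ with $\pi_i>\pi_1>\pi_n>\pi_j$ (i.e. $\pi$ avoids the pattern $\underline{3}41\underline{2}$, an occurrence of $3412$ whose "3" is in position $1$ and whose "2" is in position $n$).
   Context: For $\pi\in S_n$: $D(\pi)=\sum_{i}|\pi_i-i|$, $I(\pi)$ is the number of inversions, $T(\pi)=n-\mathrm{cyc}(\pi)$ with $\mathrm{cyc}$ the number of cycles in the disjoint cycle decomposition; $\pi$ is shallow if $I(\pi)+T(\pi)=D(\pi)$. *)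

theory Defs
  imports "HOL-Combinatorics.Combinatorics"
begin

text \<open>Permutations of S_n are represented as functions p :: nat => nat with p permutes {1..n}.\<close>

definition displacement :: "nat \<Rightarrow> (nat \<Rightarrow> nat) \<Rightarrow> int" where
  "displacement n p = (\<Sum>i\<in>{1..n}. \<bar>int (p i) - int i\<bar>)"

definition inversions :: "nat \<Rightarrow> (nat \<Rightarrow> nat) \<Rightarrow> nat" where
  "inversions n p = card {(i, j). i \<in> {1..n} \<and> j \<in> {1..n} \<and> i < j \<and> p i > p j}"

text \<open>Number of cycles in the disjoint cycle decomposition (fixed points count as cycles).\<close>
definition num_cycles :: "nat \<Rightarrow> (nat \<Rightarrow> nat) \<Rightarrow> nat" where
  "num_cycles n p = card (orbit p ` {1..n})"

definition reflection_length :: "nat \<Rightarrow> (nat \<Rightarrow> nat) \<Rightarrow> nat" where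
  "reflection_length n p = n - num_cycles n p"

definition shallow :: "nat \<Rightarrow> (nat \<Rightarrow> nat) \<Rightarrow> bool" where
  "shallow n p \<longleftrightarrow> int (inversions n p) + int (reflection_length n p) = displacement n p"

end

theory Submission
  imports Defs
begin


lemma orbit_skip_sub:
  assumes g: "\<And>x. g x = (if x = i0 then p n else if x = n then n else p x)"
    and pi0: "p i0 = n" and inj: "inj p" and xn: "x \<noteq> n"
  shows "y \<in> orbit g x \<Longrightarrow> y \<in> orbit p x \<and> y \<noteq> n"
proof (induction rule: orbit.induct)
  case base
  show ?case
  proof (cases "x = i0")
    case True
    have "g x = p (p x)" using g True pi0 by simp
    moreover have "p (p x) \<noteq> n" using True pi0 xn inj by (metis injD)
    moreover have "p (p x) \<in> orbit p x" by (intro orbit.step orbit.base)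
    ultimately show ?thesis by simp
  next
    case False
    have "g x = p x" using g False xn by simp
    moreover have "p x \<noteq> n" using False pi0 inj by (metis injD)
    moreover have "p x \<in> orbit p x" by (rule orbit.base)
    ultimately show ?thesis by simp
  qed
next
  case (step y)
  then have yo: "y \<in> orbit p x" and yn: "y \<noteq> n" by auto
  show ?case
  proof (cases "y = i0")
    case True
    have "g y = p (p y)" using g True pi0 yn by simp
    moreover have "p (p y) \<noteq> n" using True pi0 yn inj by (metis injD)
    moreover have "p (p y) \<in> orbit p x" using yo by (intro orbit.step)
    ultimately show ?thesis by simp
  next
    case False
    have "g y = p y" using g False yn by simp
    moreover have "p y \<noteq> n" using False pi0 inj by (metis injD)
    moreover have "p y \<in> orbit p x" using yo by (rule orbit.step)
    ultimately show ?thesis by simp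
  qed
qed

lemma orbit_skip_sup:
  assumes g: "\<And>x. g x = (if x = i0 then p n else if x = n then n else p x)"
    and pi0: "p i0 = n" and pn: "p n \<noteq> n" and inj: "inj p" and xn: "x \<noteq> n"
  shows "y \<in> orbit p x \<Longrightarrow> (y \<noteq> n \<longrightarrow> y \<in> orbit g x) \<and> (y = n \<longrightarrow> p n \<in> orbit g x)"
proof (induction rule: orbit.induct)
  case base
  show ?case
  proof (cases "x = i0")
    case True
    have "g x = p n" using g True by simp
    then show ?thesis using True pi0 orbit.base[of g x] by auto
  next
    case False
    have "g x = p x" using g False xn by simp
    moreover have "p x \<noteq> n" using False pi0 inj by (metis injD)
    ultimately show ?thesis using orbit.base[of g x] by auto
  qed
next
  case (step y)
  show ?case
  proof (cases "y = n")
    case True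
    then have "p n \<in> orbit g x" using step by simp
    then show ?thesis using True pn by simp
  next
    case False
    then have yo: "y \<in> orbit g x" using step by auto
    show ?thesis
    proof (cases "y = i0")
      case True
      have "g y = p n" using g True by simp
      then have "p n \<in> orbit g x" using yo by (metis orbit.step)
      then show ?thesis using True pi0 by simp
    next
      case False2: False
      then have "g y = p y" using g \<open>y \<noteq> n\<close> by simp
      moreover have "p y \<noteq> n" using False2 pi0 inj by (metis injD)
      ultimately show ?thesis using yo by (metis orbit.step)
    qed
  qed
qed

lemma orbit_eq_of_mem:
  assumes "permutation p" "x \<in> orbit p y" shows "orbit p x = orbit p y"
  using orbit_cyclic_eq3[OF cyclic_on_orbit'[OF assms(1)] assms(2)] .

lemma num_cycles_reduce:
  fixes p :: "nat \<Rightarrow> nat"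
  assumes perm: "p permutes {1..Suc m}" and i0: "i0 \<in> {1..Suc m}" and pi0: "p i0 = Suc m"
    and g: "\<And>x. g x = (if x = i0 then p (Suc m) else if x = Suc m then Suc m else p x)"
  shows "num_cycles (Suc m) p = num_cycles m g + (if i0 = Suc m then 1 else 0)"
proof -
  have permn: "permutation p" using perm permutation_permutes[of p] finite_atLeastAtMost by blast
  have inj: "inj p" by (rule permutes_inj[OF perm])
  have self: "\<And>x. x \<in> orbit p x" by (rule permutation_self_in_orbit[OF permn])
  have Un: "{1..Suc m} = insert (Suc m) {1..m}" by auto
  show ?thesis
  proof (cases "i0 = Suc m")
    case True
    then have "g = p" using g pi0 by (intro ext) auto
    have "orbit p (Suc m) = {Suc m}" using True pi0 orbit_eq_singleton_iff by metis
    moreover have "{Suc m} \<notin> orbit p ` {1..m}"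
    proof
      assume "{Suc m} \<in> orbit p ` {1..m}"
      then obtain x where "x \<in> {1..m}" "orbit p x = {Suc m}" by auto
      then show False using self[of x] by auto
    qed
    ultimately show ?thesis unfolding num_cycles_def Un using \<open>g = p\<close> True
      by (simp add: card_insert_disjoint)
  next
    case False
    have pn: "p (Suc m) \<noteq> Suc m" using False pi0 inj by (metis injD)
    have pnin: "p (Suc m) \<in> {1..m}" using pn permutes_in_image[OF perm] by fastforce
    have L1: "orbit g x = orbit p x - {Suc m}" if "x \<in> {1..m}" for x
    proof
      have xn: "x \<noteq> Suc m" using that by simp
      show "orbit g x \<subseteq> orbit p x - {Suc m}"
      proof
        fix y assume "y \<in> orbit g x"
        then have "y \<in> orbit p x \<and> y \<noteq> Suc m" by (rule orbit_skip_sub[OF g pi0 inj xn])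
        then show "y \<in> orbit p x - {Suc m}" by simp
      qed
      show "orbit p x - {Suc m} \<subseteq> orbit g x"
      proof
        fix y assume y: "y \<in> orbit p x - {Suc m}"
        then have "y \<in> orbit p x" by simp
        then have "(y \<noteq> Suc m \<longrightarrow> y \<in> orbit g x) \<and> (y = Suc m \<longrightarrow> p (Suc m) \<in> orbit g x)"
          by (rule orbit_skip_sup[OF g pi0 pn inj xn])
        then show "y \<in> orbit g x" using y by simp
      qed
    qed
    have L2: "orbit p ` {1..Suc m} = orbit p ` {1..m}"
    proof -
      have "orbit p (Suc m) = orbit p (p (Suc m))" by (rule permutation_orbit_step[OF permn, symmetric])
      then have "orbit p (Suc m) \<in> orbit p ` {1..m}" using pnin by (metis image_eqI)
      then show ?thesis unfolding Un image_insert by (rule insert_absorb)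
    qed
    have L3: "inj_on (\<lambda>A. A - {Suc m}) (orbit p ` {1..m})"
    proof (rule inj_onI)
      fix A B assume A: "A \<in> orbit p ` {1..m}" and B: "B \<in> orbit p ` {1..m}"
        and AB: "A - {Suc m} = B - {Suc m}"
      obtain x where x: "x \<in> {1..m}" "A = orbit p x" using A by (rule imageE) 
      obtain y where y: "y \<in> {1..m}" "B = orbit p y" using B by (rule imageE) 
      have "x \<in> A - {Suc m}" using x self[of x] by simp
      then have "x \<in> orbit p y" using AB y by simp
      then show "A = B" using x y orbit_eq_of_mem[OF permn] by simp
    qed
    have "orbit g ` {1..m} = (\<lambda>A. A - {Suc m}) ` (orbit p ` {1..m})"
      unfolding image_image by (rule image_cong) (simp_all add: L1)
    then have "num_cycles m g = card (orbit p ` {1..m})"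
      unfolding num_cycles_def using L3 by (simp add: card_image)
    then show ?thesis unfolding num_cycles_def L2 using False by simp
  qed
qed



lemma inversions_Suc:
  "inversions (Suc m) q = inversions m q + card {i\<in>{1..m}. q i > q (Suc m)}"
proof -
  have eq: "{(i, j). i \<in> {1..Suc m} \<and> j \<in> {1..Suc m} \<and> i < j \<and> q i > q j} =
     {(i, j). i \<in> {1..m} \<and> j \<in> {1..m} \<and> i < j \<and> q i > q j} \<union>
     (\<lambda>i. (i, Suc m)) ` {i\<in>{1..m}. q i > q (Suc m)}"
    by (auto simp: le_Suc_eq)
  have fin: "finite {(i, j). i \<in> {1..m} \<and> j \<in> {1..m} \<and> i < j \<and> q i > q j}"
    by (rule finite_subset[of _ "{1..m} \<times> {1..m}"]) auto
  show ?thesis unfolding inversions_def eq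
    apply (subst card_Un_disjoint[OF fin])
      apply simp
     apply force
    apply (simp add: card_image inj_on_def)
    done
qed

definition R :: "nat \<Rightarrow> nat \<Rightarrow> (nat \<Rightarrow> nat) \<Rightarrow> (nat \<times> nat) set" where
  "R m c q = {(i, j). i \<in> {1..m} \<and> j \<in> {1..m} \<and> i < j \<and> q i > q j \<and> i \<noteq> c \<and> j \<noteq> c}"

lemma inversions_row:
  assumes c: "c \<in> {1..m}"
  shows "inversions m q = card (R m c q) + card {i\<in>{1..m}. i < c \<and> q i > q c}
            + card {j\<in>{1..m}. c < j \<and> q c > q j}"
proof -
  have eq: "{(i, j). i \<in> {1..m} \<and> j \<in> {1..m} \<and> i < j \<and> q i > q j} =
     R m c q \<union> ((\<lambda>i. (i, c)) ` {i\<in>{1..m}. i < c \<and> q i > q c}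
      \<union> (\<lambda>j. (c, j)) ` {j\<in>{1..m}. c < j \<and> q c > q j})"
    using c unfolding R_def by auto
  have fin: "finite (R m c q)"
    unfolding R_def by (rule finite_subset[of _ "{1..m} \<times> {1..m}"]) auto
  have d1: "R m c q \<inter> ((\<lambda>i. (i, c)) ` {i\<in>{1..m}. i < c \<and> q i > q c}
      \<union> (\<lambda>j. (c, j)) ` {j\<in>{1..m}. c < j \<and> q c > q j}) = {}"
    unfolding R_def by auto
  have d2: "(\<lambda>i. (i, c)) ` {i\<in>{1..m}. i < c \<and> q i > q c}
      \<inter> (\<lambda>j. (c, j)) ` {j\<in>{1..m}. c < j \<and> q c > q j} = {}" by auto
  show ?thesis unfolding inversions_def eq
    apply (subst card_Un_disjoint[OF fin _ d1], simp)
    apply (subst card_Un_disjoint[OF _ _ d2], simp, simp)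
    apply (simp add: card_image inj_on_def)
    done
qed

lemma R_cong:
  assumes "\<And>x. x \<in> {1..m} \<Longrightarrow> x \<noteq> c \<Longrightarrow> q x = q' x"
  shows "R m c q = R m c q'"
  unfolding R_def using assms by auto

lemma displacement_Suc:
  "displacement (Suc m) q = displacement m q + \<bar>int (q (Suc m)) - int (Suc m)\<bar>"
  unfolding displacement_def by (simp add: add.commute)

lemma displacement_remove:
  assumes "c \<in> {1..m}"
  shows "displacement m q = \<bar>int (q c) - int c\<bar> + (\<Sum>i\<in>{1..m}-{c}. \<bar>int (q i) - int i\<bar>)"
  unfolding displacement_def using assms by (simp add: sum.remove)



definition E :: "nat \<Rightarrow> (nat \<Rightarrow> nat) \<Rightarrow> int" where
  "E n p = displacement n p - int (inversions n p) - int (reflection_length n p)"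

lemma num_cycles_le: "num_cycles n p \<le> n"
  unfolding num_cycles_def by (rule order_trans[OF card_image_le]) simp_all

lemma perm_range: assumes "p permutes {1..n}" "x \<in> {1..n}" shows "p x \<in> {1..n}"
  using assms(2) by (simp only: permutes_in_image[OF assms(1)])

lemma permutes_shrink:
  assumes "p permutes insert a S" "p a = a" shows "p permutes S"
proof -
  have "\<forall>x. x \<notin> S \<longrightarrow> p x = x"
  proof (intro allI impI)
    fix x assume "x \<notin> S"
    show "p x = x"
    proof (cases "x = a")
      case True then show ?thesis using assms(2) by simp
    next
      case False then have "x \<notin> insert a S" using \<open>x \<notin> S\<close> by simp
      then show ?thesis using assms(1) permutes_not_in by metis
    qed
  qed
  moreover have "\<forall>y. \<exists>!x. p x = y" using assms(1) unfolding permutes_def by blast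
  ultimately show ?thesis unfolding permutes_def by blast
qed

lemma Suc_ins: "{1..Suc m} = insert (Suc m) {1..(m::nat)}" by auto

lemma reduce_fix:
  assumes perm: "p permutes {1..Suc m}" and pfix: "p (Suc m) = Suc m"
  shows "p permutes {1..m}" "E (Suc m) p = E m p"
proof -
  show "p permutes {1..m}"
    using perm pfix unfolding Suc_ins by (rule permutes_shrink)
  have c: "num_cycles (Suc m) p = num_cycles m p + 1"
    using num_cycles_reduce[OF perm _ pfix, of p] pfix by auto
  have "{i\<in>{1..m}. p i > p (Suc m)} = {}"
  proof -
    { fix i assume "i \<in> {1..m}" "p i > p (Suc m)"
      then have "p i \<in> {1..Suc m}" using perm_range[OF perm, of i] by auto
      then have False using \<open>p i > p (Suc m)\<close> pfix by auto }
    then show ?thesis by auto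
  qed
  then have i: "inversions (Suc m) p = inversions m p" using inversions_Suc[of m p] by simp
  have d: "displacement (Suc m) p = displacement m p" using displacement_Suc[of m p] pfix by simp
  show "E (Suc m) p = E m p" unfolding E_def reflection_length_def c i d by simp
qed

lemma reduce_move:
  fixes p g :: "nat \<Rightarrow> nat"
  assumes perm: "p permutes {1..Suc m}" and i0: "i0 \<in> {1..m}" and pi0: "p i0 = Suc m"
    and g: "\<And>x. g x = (if x = i0 then p (Suc m) else if x = Suc m then Suc m else p x)"
  defines "k \<equiv> p (Suc m)"
  defines "a \<equiv> card {x\<in>{1..m}. i0 < x \<and> p x > k}"
  shows "g permutes {1..m}"
    and "E (Suc m) p = E m g + 2 * (int m - int (max i0 k) - int a)"
    and "a \<le> m - max i0 k"
    and "max i0 k \<le> m"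
proof -
  have inj: "inj p" by (rule permutes_inj[OF perm])
  have gc: "g = p \<circ> Transposition.transpose i0 (Suc m)"
    by (rule ext) (simp add: g pi0 Transposition.transpose_def)
  have gS: "g permutes {1..Suc m}" unfolding gc
    by (rule permutes_compose[OF permutes_swap_id perm]) (use i0 in auto)
  show gperm: "g permutes {1..m}"
  proof -
    have "g (Suc m) = Suc m" using g[of "Suc m"] i0 by simp
    with gS show ?thesis unfolding Suc_ins by (rule permutes_shrink)
  qed
  have i0n: "i0 \<noteq> Suc m" using i0 by simp
  have kne: "k \<noteq> Suc m" unfolding k_def using pi0 i0n inj by (metis injD)
  have krange: "k \<in> {1..m}" using perm_range[OF perm, of "Suc m"] kne unfolding k_def by auto
  have prange: "p x \<in> {1..m}" "p x \<noteq> k" if "x \<in> {1..m}" "x \<noteq> i0" for x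
  proof -
    have "p x \<noteq> Suc m" using that pi0 inj by (metis injD)
    then show "p x \<in> {1..m}" using perm_range[OF perm, of x] that by auto
    show "p x \<noteq> k" unfolding k_def using that inj by (metis injD atLeastAtMost_iff Suc_n_not_le_n)
  qed
  have geq: "g x = p x" if "x \<in> {1..m}" "x \<noteq> i0" for x using g that by auto
  have gi0: "g i0 = k" using g k_def by simp
  define L where "L = card {i\<in>{1..m}. i < i0 \<and> p i > k}"
  define Bg where "Bg = card {j\<in>{1..m}. i0 < j \<and> k > p j}"
  define Rc where "Rc = card (R m i0 p)"
  have I1: "inversions (Suc m) p = inversions m p + card {i\<in>{1..m}. p i > k}"
    unfolding k_def by (rule inversions_Suc)
  have e1: "{i\<in>{1..m}. i < i0 \<and> p i > p i0} = {}"
    using pi0 perm_range[OF perm] by (auto simp: not_less)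
  have cardgt: "card {j\<in>{1..m}. i0 < j} = m - i0"
  proof -
    have "{j\<in>{1..m}. i0 < j} = {Suc i0..m}" using i0 by auto
    then show ?thesis by simp
  qed
  have e2: "{j\<in>{1..m}. i0 < j \<and> p i0 > p j} = {j\<in>{1..m}. i0 < j}"
    using prange pi0 by fastforce
  have I2: "inversions m p = Rc + (m - i0)"
    using inversions_row[OF i0, of p] unfolding Rc_def e1 e2 cardgt by simp
  have I3: "inversions m g = Rc + L + Bg"
  proof -
    have "R m i0 g = R m i0 p" by (rule R_cong) (simp add: geq)
    moreover have "{i\<in>{1..m}. i < i0 \<and> g i > g i0} = {i\<in>{1..m}. i < i0 \<and> p i > k}"
      using geq gi0 by auto
    moreover have "{j\<in>{1..m}. i0 < j \<and> g i0 > g j} = {j\<in>{1..m}. i0 < j \<and> k > p j}"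
      using geq gi0 by auto
    ultimately show ?thesis using inversions_row[OF i0, of g] unfolding Rc_def L_def Bg_def by simp
  qed
  have I4: "card {i\<in>{1..m}. p i > k} = L + 1 + a"
  proof -
    have "{i\<in>{1..m}. p i > k} = {i\<in>{1..m}. i < i0 \<and> p i > k} \<union> ({i0} \<union> {x\<in>{1..m}. i0 < x \<and> p x > k})"
      using i0 pi0 kne krange by auto
    also have "\<dots> = insert i0 ({i\<in>{1..m}. i < i0 \<and> p i > k} \<union> {x\<in>{1..m}. i0 < x \<and> p x > k})"
      by auto
    finally have eq: "{i\<in>{1..m}. p i > k} = insert i0 ({i\<in>{1..m}. i < i0 \<and> p i > k} \<union> {x\<in>{1..m}. i0 < x \<and> p x > k})" .
    have f1: "finite {i\<in>{1..m}. i < i0 \<and> p i > k}" by (rule finite_subset[of _ "{1..m}"]) auto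
    have f2: "finite {x\<in>{1..m}. i0 < x \<and> p x > k}" by (rule finite_subset[of _ "{1..m}"]) auto
    have "card ({i\<in>{1..m}. i < i0 \<and> p i > k} \<union> {x\<in>{1..m}. i0 < x \<and> p x > k}) = L + a"
      unfolding L_def a_def by (rule card_Un_disjoint[OF f1 f2]) auto
    moreover have "i0 \<notin> {i\<in>{1..m}. i < i0 \<and> p i > k} \<union> {x\<in>{1..m}. i0 < x \<and> p x > k}" by auto
    ultimately show ?thesis unfolding eq using f1 f2 by (simp add: card_insert_disjoint)
  qed
  have I5: "m - i0 = a + Bg"
  proof -
    have ne: "p j > k \<or> k > p j" if "j \<in> {1..m}" "i0 < j" for j
    proof -
      have "p j \<noteq> k" using prange(2)[of j] that by simp
      then show ?thesis by (rule linorder_neqE_nat) simp_all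
    qed
    have eq: "{j\<in>{1..m}. i0 < j} = {x\<in>{1..m}. i0 < x \<and> p x > k} \<union> {j\<in>{1..m}. i0 < j \<and> k > p j}"
      using ne by blast
    have f1: "finite {x\<in>{1..m}. i0 < x \<and> p x > k}" by (rule finite_subset[of _ "{1..m}"]) auto
    have f2: "finite {j\<in>{1..m}. i0 < j \<and> k > p j}" by (rule finite_subset[of _ "{1..m}"]) auto
    have "card {j\<in>{1..m}. i0 < j} = a + Bg" unfolding a_def Bg_def eq
      by (rule card_Un_disjoint[OF f1 f2]) auto
    then show ?thesis using cardgt by simp
  qed
  have D1: "displacement (Suc m) p = displacement m p + \<bar>int k - int (Suc m)\<bar>"
    unfolding k_def by (rule displacement_Suc)
  define S where "S = (\<Sum>i\<in>{1..m}-{i0}. \<bar>int (p i) - int i\<bar>)"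
  have D2: "displacement m p = \<bar>int (Suc m) - int i0\<bar> + S"
    using displacement_remove[OF i0, of p] pi0 unfolding S_def by simp
  have D3: "displacement m g = \<bar>int k - int i0\<bar> + S"
  proof -
    have "(\<Sum>i\<in>{1..m}-{i0}. \<bar>int (g i) - int i\<bar>) = S"
      unfolding S_def by (rule sum.cong) (auto simp: geq)
    then show ?thesis using displacement_remove[OF i0, of g] gi0 by simp
  qed
  have C1: "num_cycles (Suc m) p = num_cycles m g"
    using num_cycles_reduce[OF perm _ pi0 g] i0 by auto
  have C2: "num_cycles m g \<le> m" by (rule num_cycles_le)
  have ileq: "i0 \<le> m" "k \<le> m" using i0 krange by auto
  show "E (Suc m) p = E m g + 2 * (int m - int (max i0 k) - int a)"
    unfolding E_def reflection_length_def C1 I1 I2 I3 I4 D1 D2 D3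
    using I5 C2 ileq by (simp add: of_nat_diff max_def)
  have a1: "a \<le> m - i0"
  proof -
    have "a \<le> card {j\<in>{1..m}. i0 < j}" unfolding a_def
      by (rule card_mono) auto
    then show ?thesis using cardgt by simp
  qed
  have a2: "a \<le> m - k"
  proof -
    have sub: "p ` {x\<in>{1..m}. i0 < x \<and> p x > k} \<subseteq> {Suc k..m}"
    proof
      fix y assume "y \<in> p ` {x\<in>{1..m}. i0 < x \<and> p x > k}"
      then obtain x where x: "x \<in> {1..m}" "i0 < x" "p x > k" "y = p x" by blast
      then have "p x \<in> {1..m}" using prange(1)[of x] by simp
      then show "y \<in> {Suc k..m}" using x by simp
    qed
    have "a = card (p ` {x\<in>{1..m}. i0 < x \<and> p x > k})"
      unfolding a_def by (rule card_image[OF inj_on_subset[OF inj subset_UNIV], symmetric])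
    also have "\<dots> \<le> card {Suc k..m}" by (rule card_mono[OF _ sub]) simp
    finally show ?thesis by simp
  qed
  show "a \<le> m - max i0 k" using a1 a2 by (simp add: max_def)
  show "max i0 k \<le> m" using ileq by simp
qed



lemma reduction:
  assumes perm: "p permutes {1..Suc m}"
  obtains (fixed) "p (Suc m) = Suc m" "p permutes {1..m}" "E (Suc m) p = E m p"
  | (moved) i0 g where "i0 \<in> {1..m}" "p i0 = Suc m" "g permutes {1..m}"
      "\<And>x. g x = (if x = i0 then p (Suc m) else if x = Suc m then Suc m else p x)"
      "E (Suc m) p = E m g + 2 * (int m - int (max i0 (p (Suc m)))
          - int (card {x\<in>{1..m}. i0 < x \<and> p x > p (Suc m)}))"
      "int (card {x\<in>{1..m}. i0 < x \<and> p x > p (Suc m)}) \<le> int m - int (max i0 (p (Suc m)))"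
proof -
  have "Suc m \<in> p ` {1..Suc m}" using permutes_image[OF perm] by simp
  then obtain i0 where i0: "i0 \<in> {1..Suc m}" "p i0 = Suc m" by (rule imageE) simp
  show ?thesis
  proof (cases "i0 = Suc m")
    case True
    then have pf: "p (Suc m) = Suc m" using i0 by simp
    show ?thesis by (rule fixed[OF pf reduce_fix[OF perm pf]])
  next
    case False
    then have i0': "i0 \<in> {1..m}" using i0 by auto
    define g where "g = (\<lambda>x. if x = i0 then p (Suc m) else if x = Suc m then Suc m else p x)"
    have g: "\<And>x. g x = (if x = i0 then p (Suc m) else if x = Suc m then Suc m else p x)"
      unfolding g_def by simp
    note r = reduce_move[OF perm i0' i0(2) g]
    have r3: "int (card {x\<in>{1..m}. i0 < x \<and> p x > p (Suc m)}) \<le> int m - int (max i0 (p (Suc m)))"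
      using r(3) r(4) by linarith
    show ?thesis by (rule moved[OF i0' i0(2) r(1) g r(2) r3])
  qed
qed

lemma E_nonneg: "p permutes {1..n} \<Longrightarrow> E n p \<ge> 0"
proof (induction n arbitrary: p)
  case 0
  have "{1..0::nat} = {}" by simp
  then show ?case
    unfolding E_def displacement_def inversions_def reflection_length_def num_cycles_def by simp
next
  case (Suc m)
  show ?case
    using Suc.prems
  proof (cases rule: reduction)
    case fixed
    then show ?thesis using Suc.IH by simp
  next
    case (moved i0 g)
    have "E m g \<ge> 0" using Suc.IH moved(3) by blast
    moreover have "0 \<le> int m - int (max i0 (p (Suc m))) - int (card {x\<in>{1..m}. i0 < x \<and> p x > p (Suc m)})"
      using moved(6) by simp
    ultimately show ?thesis unfolding moved(5) by simp
  qed
qed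

lemma slack_zero:
  assumes perm: "p permutes {1..Suc m}" and i0: "i0 \<in> {1..m}" and pi0: "p i0 = Suc m"
    and a: "card {x\<in>{1..m}. i0 < x \<and> p x > p (Suc m)} = m - max i0 (p (Suc m))"
  shows slackA: "p (Suc m) \<le> i0 \<Longrightarrow> x \<in> {1..m} \<Longrightarrow> i0 < x \<Longrightarrow> p x > p (Suc m)"
    and slackB: "i0 < p (Suc m) \<Longrightarrow> p (Suc m) < v \<Longrightarrow> v \<le> m \<Longrightarrow> \<exists>x\<in>{1..m}. i0 < x \<and> p x = v"
proof -
  have inj: "inj p" by (rule permutes_inj[OF perm])
  have pr: "p x \<in> {1..m}" if "x \<in> {1..m}" "x \<noteq> i0" for x
  proof -
    have "p x \<noteq> Suc m" using that pi0 inj by (metis injD)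
    moreover have "p x \<in> {1..Suc m}" using that by (intro perm_range[OF perm]) simp
    ultimately show ?thesis by auto
  qed
  define A where "A = {x\<in>{1..m}. i0 < x \<and> p x > p (Suc m)}"
  have finA: "finite A" unfolding A_def by (rule finite_subset[of _ "{1..m}"]) auto
  {
    assume k: "p (Suc m) \<le> i0" and x: "x \<in> {1..m}" "i0 < x"
    have sub: "A \<subseteq> {Suc i0..m}" unfolding A_def by auto
    have "card A = card {Suc i0..m}" using a k unfolding A_def by simp
    then have "A = {Suc i0..m}" using card_subset_eq[OF _ sub] by simp
    then have "x \<in> A" using x by auto
    then show "p x > p (Suc m)" unfolding A_def by simp
  }
  {
    assume k: "i0 < p (Suc m)" and v: "p (Suc m) < v" "v \<le> m"
    have sub: "p ` A \<subseteq> {Suc (p (Suc m))..m}"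
    proof
      fix y assume "y \<in> p ` A"
      then obtain x where x: "x \<in> {1..m}" "i0 < x" "p x > p (Suc m)" "y = p x" unfolding A_def by blast
      then have "p x \<in> {1..m}" using pr[of x] by simp
      then show "y \<in> {Suc (p (Suc m))..m}" using x by simp
    qed
    have "card (p ` A) = card A" by (rule card_image[OF inj_on_subset[OF inj subset_UNIV]])
    also have "\<dots> = card {Suc (p (Suc m))..m}" using a k unfolding A_def by simp
    finally have "p ` A = {Suc (p (Suc m))..m}" using card_subset_eq[OF _ sub] by simp
    then have "v \<in> p ` A" using v by auto
    then show "\<exists>x\<in>{1..m}. i0 < x \<and> p x = v" unfolding A_def by auto
  }
qed

lemma zero_split:
  fixes e :: int and a b :: nat
  assumes "0 = e + 2 * (int m - int b - int a)" "e \<ge> 0" "int a \<le> int m - int b"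
  shows "e = 0" "a = m - b"
proof -
  have h: "int m - int b - int a \<ge> 0" using assms(3) by simp
  show e0: "e = 0" using assms(1,2) h by simp
  then have "int m - int b - int a = 0" using assms(1) by simp
  then show "a = m - b" by simp
qed

lemma H1_free:
  "p permutes {1..n} \<Longrightarrow> E n p = 0 \<Longrightarrow> 1 \<le> r \<Longrightarrow> r < i \<Longrightarrow> i < j \<Longrightarrow> j < s \<Longrightarrow> s \<le> n
   \<Longrightarrow> p j = 1 \<Longrightarrow> p r > p s \<Longrightarrow> p i > p r \<Longrightarrow> (\<forall>x\<in>{1..n}. p x > p i \<longrightarrow> x > i) \<Longrightarrow> False"
proof (induction n arbitrary: p r i j s)
  case 0
  then show ?case by simp
next
  case (Suc m)
  note prems = Suc.prems
  have inj: "inj p" by (rule permutes_inj[OF prems(1)])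
  have rng: "p x \<in> {1..Suc m}" if "x \<in> {1..Suc m}" for x using perm_range[OF prems(1) that] .
  show ?case
    using prems(1)
  proof (cases rule: reduction)
    case fixed
    have "p s < Suc m" using prems(9) rng[of r] prems(3-7) by auto
    then have sm: "s \<le> m" using fixed(1) prems(7) by (cases "s = Suc m") auto
    show False
    proof (rule Suc.IH[OF fixed(2) _ prems(3-5) _ sm prems(8-10)])
      show "E m p = 0" using fixed(3) prems(2) by simp
      show "j < s" by (rule prems(6))
      show "\<forall>x\<in>{1..m}. p i < p x \<longrightarrow> i < x" using prems(11) by auto
    qed
  next
    case (moved i0 g)
    define k where "k = p (Suc m)"
    have z: "E m g = 0" "card {x\<in>{1..m}. i0 < x \<and> p x > p (Suc m)} = m - max i0 (p (Suc m))"
      using zero_split[OF _ E_nonneg[OF moved(3)] moved(6)] moved(5) prems(2) by simp_all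
    note A = slackA[OF prems(1) moved(1) moved(2) z(2)]
    note B = slackB[OF prems(1) moved(1) moved(2) z(2)]
    have i0m: "i0 \<le> m" "1 \<le> i0" using moved(1) by auto
    have kr: "k \<in> {1..m}"
    proof -
      have "k \<noteq> Suc m" unfolding k_def using moved(2) i0m injD[OF inj, of "Suc m" i0] by auto
      then show ?thesis using rng[of "Suc m"] unfolding k_def by auto
    qed
    have pr: "p x \<in> {1..m}" if "x \<in> {1..Suc m}" "x \<noteq> i0" for x
    proof -
      have "p x \<noteq> Suc m" using that moved(2) inj by (metis injD)
      then show ?thesis using rng[OF that(1)] by auto
    qed
    have pne: "p x \<noteq> p y" if "x \<noteq> y" for x y using that inj by (metis injD)
    have gx: "g x = p x" if "x \<noteq> i0" "x \<noteq> Suc m" for x using moved(4)[of x] that by simp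
    have gi0: "g i0 = k" using moved(4)[of i0] k_def by simp
    have ii0: "i \<le> i0"
    proof (rule ccontr)
      assume "\<not> i \<le> i0"
      then have "i0 < i" by simp
      moreover have "p i \<noteq> Suc m" using pne[of i i0] \<open>i0 < i\<close> moved(2) by auto
      moreover have "p i \<le> Suc m" using rng[of i] prems(3-7) by auto
      ultimately have "p i < p i0" using moved(2) by simp
      moreover have "i0 \<in> {1..Suc m}" using moved(1) by simp
      ultimately have "i < i0" using prems(11) by blast
      then show False using \<open>i0 < i\<close> by simp
    qed
    have jr: "j \<in> {1..m}" using prems(3-7) by auto
    have j0: "j \<noteq> i0" using prems(8) moved(2) i0m by auto
    have rr: "r \<in> {1..Suc m}" "r \<noteq> i0" using prems(3-7) ii0 by auto
    have gj: "g j = 1" using gx[of j] j0 jr prems(8) by simp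
    have gr: "g r = p r" using gx[of r] rr prems(3-7) by simp
    show False
    proof (cases "i0 = i")
      case True
      show False
      proof (cases "k \<le> i0")
        case True
        have "p j > k" using A[of j] True jr \<open>i0 = i\<close> prems(5) unfolding k_def by simp
        then show False using prems(8) kr by simp
      next
        case False
        then have ki: "i0 < k" by simp
        have noB: "\<not> (k < p x \<and> p x \<le> m)" if "x \<in> {1..Suc m}" "x < i0" for x
        proof
          assume "k < p x \<and> p x \<le> m"
          then obtain y where y: "y \<in> {1..m}" "i0 < y" "p y = p x" using B[of "p x"] ki unfolding k_def by auto
          then show False using pne[of y x] that by auto
        qed
        have prk: "p r < k"
        proof -
          have "p r \<noteq> k" unfolding k_def using pne[of r "Suc m"] prems(3-7) by auto
          moreover have "p r \<le> m" using pr[OF rr] by simp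
          ultimately show ?thesis using noB[OF rr(1)] prems(4) \<open>i0 = i\<close> by auto
        qed
        have sm: "s \<noteq> Suc m" using prk prems(9) unfolding k_def by auto
        then have sm': "s \<le> m" using prems(7) by simp
        have s0: "s \<noteq> i0" using prems(9) moved(2) rng[of r] rr by auto
        have gs: "g s = p s" using gx[of s] sm s0 by simp
        show False
        proof (rule Suc.IH[OF moved(3) z(1) prems(3-6) sm'])
          show "g j = 1" by (rule gj)
          show "g s < g r" using gs gr prems(9) by simp
          show "g r < g i" using gr gi0 \<open>i0 = i\<close> prk by simp
          show "\<forall>x\<in>{1..m}. g i < g x \<longrightarrow> i < x"
          proof (intro ballI impI)
            fix x assume x: "x \<in> {1..m}" "g i < g x"
            then have x0: "x \<noteq> i0" using \<open>i0 = i\<close> by auto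
            then have "g x = p x" using gx x by simp
            then have "k < p x" "p x \<le> m" using x gi0 \<open>i0 = i\<close> pr[of x] x0 by auto
            then obtain y where y: "y \<in> {1..m}" "i0 < y" "p y = p x" using B[of "p x"] ki unfolding k_def by auto
            then have "y = x" using inj by (metis injD)
            then show "i < x" using y \<open>i0 = i\<close> by simp
          qed
        qed
      qed
    next
      case False
      then have ii: "i < i0" using ii0 by simp
      have gi: "g i = p i" using gx[of i] ii i0m by simp
      have gall: "\<forall>x\<in>{1..m}. g i < g x \<longrightarrow> i < x"
      proof (intro ballI impI)
        fix x assume x: "x \<in> {1..m}" "g i < g x"
        show "i < x"
        proof (cases "x = i0")
          case True then show ?thesis using ii by simp
        next
          case False
          then have "g x = p x" using gx x by simp
          then show ?thesis using prems(11) x gi by auto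
        qed
      qed
      show False
      proof (cases "s = Suc m")
        case False
        then have sm': "s \<le> m" using prems(7) by simp
        have s0: "s \<noteq> i0" using prems(9) moved(2) rng[of r] rr by auto
        have gs: "g s = p s" using gx[of s] False s0 by simp
        show False
          by (rule Suc.IH[OF moved(3) z(1) prems(3-6) sm' gj _ _ gall])
             (use gs gr gi prems(9,10) in simp_all)
      next
        case True
        have kps: "k = p s" unfolding k_def using True by simp
        show False
        proof (cases "j < i0")
          case True
          show False
            by (rule Suc.IH[OF moved(3) z(1) prems(3-5) True i0m(1) gj _ _ gall])
               (use gi0 kps gr gi prems(9,10) in simp_all)
        next
          case False
          then have ji: "i0 < j" using j0 by simp
          show False
          proof (cases "k \<le> i0")
            case True
            have "p j > k" using A[of j] True jr ji unfolding k_def by simp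
            then show False using prems(8) kr by simp
          next
            case False
            have "p i \<le> m" using pr[of i] ii i0m prems(3,4) by simp
            moreover have "k < p i" using kps prems(9,10) by simp
            ultimately obtain y where y: "y \<in> {1..m}" "i0 < y" "p y = p i"
              using B[of "p i"] False unfolding k_def by auto
            then have "y = i" using inj by (metis injD)
            then show False using y ii by simp
          qed
        qed
      qed
    qed
  qed
qed


lemma H2_free:
  "p permutes {1..n} \<Longrightarrow> E n p = 0 \<Longrightarrow> 1 < i \<Longrightarrow> i < j \<Longrightarrow> j < c \<Longrightarrow> c \<le> n
   \<Longrightarrow> p i > p 1 \<Longrightarrow> p 1 > p c \<Longrightarrow> p c > p j \<Longrightarrow> (\<forall>x. c < x \<longrightarrow> x \<le> n \<longrightarrow> p x > p c) \<Longrightarrow> False"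
proof (induction n arbitrary: p i j c)
  case 0
  then show ?case by simp
next
  case (Suc m)
  note prems = Suc.prems
  have inj: "inj p" by (rule permutes_inj[OF prems(1)])
  have rng: "p x \<in> {1..Suc m}" if "x \<in> {1..Suc m}" for x using perm_range[OF prems(1) that] .
  have pne: "p x \<noteq> p y" if "x \<noteq> y" for x y using that inj by (metis injD)
  have p1: "p 1 \<le> Suc m" "p i \<le> Suc m" using rng[of 1] rng[of i] prems(3-6) by auto
  show ?case
    using prems(1)
  proof (cases rule: reduction)
    case fixed
    have "p c \<noteq> Suc m" using prems(8) p1 by simp
    then have cm: "c \<le> m" using fixed(1) prems(6) by (cases "c = Suc m") auto
    show False
    proof (rule Suc.IH[OF fixed(2) _ prems(3-5) cm prems(7-9)])
      show "E m p = 0" using fixed(3) prems(2) by simp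
      show "\<forall>x. c < x \<longrightarrow> x \<le> m \<longrightarrow> p c < p x" using prems(10) by auto
    qed
  next
    case (moved i0 g)
    define k where "k = p (Suc m)"
    have z: "E m g = 0" "card {x\<in>{1..m}. i0 < x \<and> p x > p (Suc m)} = m - max i0 (p (Suc m))"
      using zero_split[OF _ E_nonneg[OF moved(3)] moved(6)] moved(5) prems(2) by simp_all
    note A = slackA[OF prems(1) moved(1) moved(2) z(2)]
    note B = slackB[OF prems(1) moved(1) moved(2) z(2)]
    have i0m: "i0 \<le> m" "1 \<le> i0" using moved(1) by auto
    have pr: "p x \<in> {1..m}" if "x \<in> {1..Suc m}" "x \<noteq> i0" for x
    proof -
      have "p x \<noteq> Suc m" using that moved(2) inj by (metis injD)
      then show ?thesis using rng[OF that(1)] by auto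
    qed
    have gx: "g x = p x" if "x \<noteq> i0" "x \<noteq> Suc m" for x using moved(4)[of x] that by simp
    have gi0: "g i0 = k" using moved(4)[of i0] k_def by simp
    have i01: "i0 \<noteq> 1" using moved(2) prems(7) p1 by auto
    have i0j: "i0 \<noteq> j" using moved(2) prems(8,9) p1 by auto
    have i0c: "i0 \<noteq> c" using moved(2) prems(8) p1 by auto
    have g1: "g 1 = p 1" using gx[of 1] i01 i0m by simp
    have gj: "g j = p j" using gx[of j] i0j prems(5,6) by simp
    have noB: "\<not> (k < p x \<and> p x \<le> m)" if "x \<in> {1..Suc m}" "x < i0" "i0 < k" for x
    proof
      assume h: "k < p x \<and> p x \<le> m"
      have "i0 < p (Suc m)" "p (Suc m) < p x" using that(3) h k_def by simp_all
      then obtain y where y: "y \<in> {1..m}" "i0 < y" "p y = p x" using B[of "p x"] h by auto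
      then show False using pne[of y x] that by auto
    qed
    show False
    proof (cases "c < i0")
      case True
      have cm: "c \<le> m" using True i0m by simp
      have ii: "i \<noteq> i0" using True prems(4,5) by simp
      show False
      proof (rule Suc.IH[OF moved(3) z(1) prems(3-5) cm])
        show "g 1 < g i" using g1 gx[of i] ii prems(4-6) prems(7) by simp
        show "g c < g 1" using g1 gx[of c] True cm prems(8) by simp
        show "g j < g c" using gj gx[of c] True cm prems(9) by simp
        show "\<forall>x. c < x \<longrightarrow> x \<le> m \<longrightarrow> g c < g x"
        proof (intro allI impI)
          fix x assume x: "c < x" "x \<le> m"
          have gc: "g c = p c" using gx[of c] True cm by simp
          show "g c < g x"
          proof (cases "x = i0")
            case True
            have "p c < k" unfolding k_def using prems(10) cm by simp
            then show ?thesis using gc gi0 True by simp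
          next
            case False
            then show ?thesis using gc gx[of x] x prems(10) by simp
          qed
        qed
      qed
    next
      case False
      then have ic: "i0 < c" using i0c by simp
      show False
      proof (cases "c = Suc m")
        case False
        then have cm: "c \<le> m" using prems(6) by simp
        have gc: "g c = p c" using gx[of c] i0c False by simp
        have gall: "\<forall>x. c < x \<longrightarrow> x \<le> m \<longrightarrow> g c < g x"
        proof (intro allI impI)
          fix x assume x: "c < x" "x \<le> m"
          then show "g c < g x" using gc gx[of x] ic prems(10) by simp
        qed
        show False
        proof (cases "i = i0")
          case False
          show False
            by (rule Suc.IH[OF moved(3) z(1) prems(3-5) cm _ _ _ gall])
               (use g1 gj gc gx[of i] False prems(4-9) in simp_all)
        next
          case True
          have kc: "p c < k" unfolding k_def using prems(10) prems(6) cm by simp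
          show False
          proof (cases "k \<le> i0")
            case True
            have "p j > k" using A[of j] True prems(3-6) \<open>i = i0\<close> cm unfolding k_def by simp
            then show False using kc prems(9) by simp
          next
            case False
            then have ki: "i0 < k" by simp
            have p1k: "p 1 < k"
            proof -
              have "p 1 \<noteq> k" unfolding k_def using pne[of 1 "Suc m"] i0m by simp
              moreover have "p 1 \<le> m" using pr[of 1] i01 by simp
              moreover have "1 < i0" using i01 i0m by simp
              ultimately show ?thesis using noB[of 1] ki by auto
            qed
            show False
              by (rule Suc.IH[OF moved(3) z(1) prems(3-5) cm _ _ _ gall])
                 (use g1 gj gc gi0 True p1k prems(8,9) in simp_all)
          qed
        qed
      next
        case True
        have kc: "k = p c" unfolding k_def using True by simp
        show False
        proof (cases "k \<le> i0")
          case False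
          then have ki: "i0 < k" by simp
          have "p 1 \<le> m" using pr[of 1] i01 by simp
          moreover have "1 < i0" using i01 i0m by simp
          moreover have "k < p 1" using kc prems(8) by simp
          ultimately show False using noB[of 1] ki by auto
        next
          case True
          have ji: "j < i0"
          proof (rule ccontr)
            assume "\<not> j < i0"
            then have "i0 < j" using i0j by simp
            then have "p j > k" using A[of j] True prems(3-6) \<open>c = Suc m\<close> unfolding k_def by simp
            then show False using kc prems(9) by simp
          qed
          have ii: "i \<noteq> i0" using ji prems(4) by simp
          show False
          proof (rule Suc.IH[OF moved(3) z(1) prems(3,4) ji i0m(1)])
            show "g 1 < g i" using g1 gx[of i] ii prems(4-6) prems(7) by simp
            show "g i0 < g 1" using g1 gi0 kc prems(8) by simp
            show "g j < g i0" using gj gi0 kc prems(9) by simp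
            show "\<forall>x. i0 < x \<longrightarrow> x \<le> m \<longrightarrow> g i0 < g x"
            proof (intro allI impI)
              fix x assume x: "i0 < x" "x \<le> m"
              then have "p x > k" using A[of x] True unfolding k_def by simp
              then show "g i0 < g x" using gi0 gx[of x] x by simp
            qed
          qed
        qed
      qed
    qed
  qed
qed

lemma shallow_E: "shallow n p \<Longrightarrow> E n p = 0"
  unfolding shallow_def E_def by simp

theorem theorem2p8:
  fixes n :: nat and p :: "nat \<Rightarrow> nat"
  assumes "p permutes {1..n}" and "shallow n p"
  shows "\<not> (\<exists>r i j s. 1 \<le> r \<and> r < i \<and> i < j \<and> j < s \<and> s \<le> n \<and>
                 p i = n \<and> p j = 1 \<and> p r > p s) \<and>
         \<not> (\<exists>i j. 1 < i \<and> i < j \<and> j < n \<and> p i > p 1 \<and> p 1 > p n \<and> p n > p j)"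
proof
  have E0: "E n p = 0" by (rule shallow_E[OF assms(2)])
  have inj: "inj p" by (rule permutes_inj[OF assms(1)])
  have rng: "p x \<in> {1..n}" if "x \<in> {1..n}" for x using perm_range[OF assms(1) that] .
  show "\<not> (\<exists>r i j s. 1 \<le> r \<and> r < i \<and> i < j \<and> j < s \<and> s \<le> n \<and>
                 p i = n \<and> p j = 1 \<and> p r > p s)"
  proof
    assume "\<exists>r i j s. 1 \<le> r \<and> r < i \<and> i < j \<and> j < s \<and> s \<le> n \<and> p i = n \<and> p j = 1 \<and> p r > p s"
    then obtain r i j s where h: "1 \<le> r" "r < i" "i < j" "j < s" "s \<le> n" "p i = n" "p j = 1" "p r > p s"
      by blast
    have "p r \<noteq> p i" using h(2) inj by (metis injD less_irrefl)
    moreover have "p r \<le> n" using rng[of r] h by auto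
    ultimately have pri: "p i > p r" using h(6) by simp
    have all: "\<forall>x\<in>{1..n}. p x > p i \<longrightarrow> x > i" using rng h(6) by fastforce
    show False by (rule H1_free[OF assms(1) E0 h(1-5) h(7) h(8) pri all])
  qed
  show "\<not> (\<exists>i j. 1 < i \<and> i < j \<and> j < n \<and> p i > p 1 \<and> p 1 > p n \<and> p n > p j)"
  proof
    assume "\<exists>i j. 1 < i \<and> i < j \<and> j < n \<and> p i > p 1 \<and> p 1 > p n \<and> p n > p j"
    then obtain i j where h: "1 < i" "i < j" "j < n" "p i > p 1" "p 1 > p n" "p n > p j" by blast
    show False by (rule H2_free[OF assms(1) E0 h(1-3) order_refl h(4-6)]) simp
  qed
qed

end
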